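(* Let $q\ge 2$ and $n\ge 1$ be integers and let $m=n+1$. Under uniform transmission over the $1$-insertion channel with input length $n$, $$\min_{{\boldsymbol y}\in\Sigma_q^{m}} \mathsf{H}^{\mathsf{In}}_{1\text{-}\mathsf{Ins}}({\boldsymbol y}) = 0,$$ and this minimum is attained only by channel outputs having a single run.
   Context: $\Sigma_q=\{0,1,\dots,q-1\}$. For sequences ${\boldsymbol x}$ of length $\ell$ and ${\boldsymbol y}$ of length $N\ge \ell$, the embedding number $\omega_{{\boldsymbol x}}({\boldsymbol y})$ is the number of index tuples $1\le i_1<\dots<i_\ell\le N$ with $y_{i_j}=x_j$ for all $j$. The $k$-insertion channel with input length $n$ maps ${\boldsymbol x}\in\Sigma_q^n$ to ${\boldsymbol y}\in\Sigma_q^{n+k}$ with probability $\Pr\{{\boldsymbol y}\mid{\boldsymbol x}\}=\omega_{{\boldsymbol x}}({\boldsymbol y})/\big(\binom{n+k}{k}q^k\big)$. Under uniform transmission the input $X$ is uniform on $\Sigma_q^n$, and for an output ${\boldsymbol y}$ the input entropy is $\mathsf{H}^{\mathsf{In}}_{k\text{-}\mathsf{Ins}}({\boldsymbol y})=H(X\mid Y={\boldsymbol y})=-\sum_{{\boldsymbol x}}P({\boldsymbol x}\mid{\boldsymbol y})\log_2 P({\boldsymbol x}\mid{\boldsymbol y})$ with $P({\boldsymbol x}\mid {\boldsymbol y})=\Pr\{{\boldsymbol y}\mid{\boldsymbol x}\}/\sum_{{\boldsymbol x}'\in\Sigma_q^n}\Pr\{{\boldsymbol y}\mid{\boldsymbol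 x}'\}$. A run is a maximal block of identical consecutive symbols. *)

theory Defs
  imports Complex_Main
begin

definition seqs :: "nat \<Rightarrow> nat \<Rightarrow> nat list set" where
  "seqs q n = {xs. length xs = n \<and> set xs \<subseteq> {0..<q}}"

text \<open>Embedding number: number of index tuples i_1 < ... < i_l (0-based here)
  with y_{i_j} = x_j.\<close>
definition emb_num :: "nat list \<Rightarrow> nat list \<Rightarrow> nat" where
  "emb_num x y = card {is :: nat list. length is = length x \<and> sorted_wrt (<) is
      \<and> (\<forall>i\<in>set is. i < length y) \<and> (\<forall>j<length x. y ! (is ! j) = x ! j)}"

definition ins_prob :: "nat \<Rightarrow> nat \<Rightarrow> nat list \<Rightarrow> nat list \<Rightarrow> real" where
  "ins_prob q k y x = real (emb_num x y) / (real ((length x + k) choose k) * real q ^ k)"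

text \<open>Posterior P(x | y) under uniform input on Sigma_q^n.\<close>
definition post_prob :: "nat \<Rightarrow> nat \<Rightarrow> nat \<Rightarrow> nat list \<Rightarrow> nat list \<Rightarrow> real" where
  "post_prob q n k y x = ins_prob q k y x / (\<Sum>x'\<in>seqs q n. ins_prob q k y x')"

text \<open>Input entropy H(X | Y = y) (with the convention 0 log 0 = 0).\<close>
definition input_entropy :: "nat \<Rightarrow> nat \<Rightarrow> nat \<Rightarrow> nat list \<Rightarrow> real" where
  "input_entropy q n k y =
     - (\<Sum>x\<in>seqs q n. post_prob q n k y x * log 2 (post_prob q n k y x))"

definition num_runs :: "nat list \<Rightarrow> nat" where
  "num_runs y = (if y = [] then 0
     else 1 + card {i. Suc i < length y \<and> y ! i \<noteq> y ! Suc i})"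

end

theory Submission
  imports Defs
begin

lemma term_le0: "0 \<le> (p::real) \<Longrightarrow> p \<le> 1 \<Longrightarrow> p * log 2 p \<le> 0"
proof (cases "p = 0")
  case False
  assume "0 \<le> p" "p \<le> 1"
  then have "log 2 p \<le> 0" using False by simp
  then show ?thesis using \<open>0 \<le> p\<close> by (simp add: mult_nonneg_nonpos)
qed simp

lemma term_lt0: "0 < (p::real) \<Longrightarrow> p < 1 \<Longrightarrow> p * log 2 p < 0"
proof -
  assume "0 < p" "p < 1"
  then have "log 2 p < 0" by simp
  then show ?thesis using \<open>0 < p\<close> by (simp add: mult_pos_neg)
qed

lemma ent_nonneg:
  fixes f :: "'a \<Rightarrow> real"
  assumes "finite A" "\<forall>x\<in>A. 0 \<le> f x"
  shows "0 \<le> - (\<Sum>x\<in>A. (f x / sum f A) * log 2 (f x / sum f A))"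
proof -
  have "\<forall>x\<in>A. (f x / sum f A) * log 2 (f x / sum f A) \<le> 0"
  proof
    fix x assume x: "x \<in> A"
    have "f x \<le> sum f A" using assms x by (intro member_le_sum) auto
    moreover have "0 \<le> f x" using assms x by auto
    ultimately have "0 \<le> f x / sum f A" "f x / sum f A \<le> 1"
      by (auto simp: divide_le_eq_1)
    then show "(f x / sum f A) * log 2 (f x / sum f A) \<le> 0" by (rule term_le0)
  qed
  then have "(\<Sum>x\<in>A. (f x / sum f A) * log 2 (f x / sum f A)) \<le> 0"
    by (simp add: sum_nonpos)
  then show ?thesis by simp
qed

lemma ent_pos:
  fixes f :: "'a \<Rightarrow> real"
  assumes "finite A" "\<forall>x\<in>A. 0 \<le> f x" "x1 \<in> A" "x2 \<in> A" "x1 \<noteq> x2" "0 < f x1" "0 < f x2"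
  shows "0 < - (\<Sum>x\<in>A. (f x / sum f A) * log 2 (f x / sum f A))"
proof -
  have T: "\<forall>x\<in>A. 0 \<le> - ((f x / sum f A) * log 2 (f x / sum f A))"
  proof
    fix x assume x: "x \<in> A"
    have "f x \<le> sum f A" using assms x by (intro member_le_sum) auto
    moreover have "0 \<le> f x" using assms x by auto
    ultimately have "0 \<le> f x / sum f A" "f x / sum f A \<le> 1"
      by (auto simp: divide_le_eq_1)
    then show "0 \<le> - ((f x / sum f A) * log 2 (f x / sum f A))" using term_le0 by force
  qed
  have "sum f {x1, x2} \<le> sum f A"
    using assms(1,2,3,4) by (intro sum_mono2) auto
  moreover have "sum f {x1, x2} = f x1 + f x2" using assms(5) by simp
  ultimately have lt: "f x1 < sum f A" using assms(7) by linarith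
  have p0: "0 < f x1 / sum f A" using lt assms(6) by simp
  have p1: "f x1 / sum f A < 1" using lt assms(6) by simp
  have "f x1 / sum f A * log 2 (f x1 / sum f A) < 0" by (rule term_lt0[OF p0 p1])
  then have "0 < - ((f x1 / sum f A) * log 2 (f x1 / sum f A))" by linarith
  then have "0 < (\<Sum>x\<in>A. - ((f x / sum f A) * log 2 (f x / sum f A)))"
    by (rule sum_pos2[OF assms(1) assms(3)]) (use T in blast)
  then show ?thesis by (simp add: sum_negf)
qed

lemma ent_zero:
  fixes f :: "'a \<Rightarrow> real"
  assumes "finite A" "\<forall>x\<in>A. x \<noteq> zz \<longrightarrow> f x = 0"
  shows "- (\<Sum>x\<in>A. (f x / sum f A) * log 2 (f x / sum f A)) = 0"
proof -
  have S: "sum f A = sum f (A \<inter> {zz})"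
    using assms by (intro sum.mono_neutral_right) auto
  have "\<forall>x\<in>A. (f x / sum f A) * log 2 (f x / sum f A) = 0"
  proof
    fix x assume x: "x \<in> A"
    show "(f x / sum f A) * log 2 (f x / sum f A) = 0"
    proof (cases "x = zz")
      case True
      then have "sum f A = f x" using S x by simp
      then show ?thesis by (cases "f x = 0") auto
    next
      case False then show ?thesis using assms x by simp
    qed
  qed
  then have "(\<Sum>x\<in>A. (f x / sum f A) * log 2 (f x / sum f A)) = 0"
    by (intro sum.neutral) blast
  then show ?thesis by (simp only: neg_equal_0_iff_equal)
qed

lemma finite_seqs: "finite (seqs q n)"
proof -
  have "seqs q n = {xs. set xs \<subseteq> {0..<q} \<and> length xs = n}" unfolding seqs_def by auto
  then show ?thesis using finite_lists_length_eq[of "{0..<q}" n] by simp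
qed

lemma finite_emb: "finite {is :: nat list. length is = length x \<and> sorted_wrt (<) is
      \<and> (\<forall>i\<in>set is. i < length y) \<and> (\<forall>j<length x. y ! (is ! j) = x ! j)}"
proof -
  have "finite {is. set is \<subseteq> {0..<length y} \<and> length is = length x}"
    using finite_lists_length_eq[of "{0..<length y}" "length x"] by simp
  then show ?thesis by (rule finite_subset[rotated]) auto
qed

definition idxf :: "nat \<Rightarrow> nat \<Rightarrow> nat" where "idxf k j = (if j < k then j else Suc j)"
definition dl :: "nat \<Rightarrow> nat list \<Rightarrow> nat list" where
  "dl k y = map (\<lambda>j. y ! idxf k j) [0..<length y - 1]"

lemma emb_dl_pos:
  assumes "length y \<ge> 1"
  shows "emb_num (dl k y) y > 0"
proof -
  let ?is = "map (idxf k) [0..<length y - 1]"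
  let ?S = "{is :: nat list. length is = length (dl k y) \<and> sorted_wrt (<) is
      \<and> (\<forall>i\<in>set is. i < length y) \<and> (\<forall>j<length (dl k y). y ! (is ! j) = (dl k y) ! j)}"
  have "sorted_wrt (<) ?is"
    unfolding sorted_wrt_map by (auto simp: sorted_wrt_iff_nth_less idxf_def)
  moreover have "\<forall>i\<in>set ?is. i < length y" using assms by (auto simp: idxf_def)
  ultimately have mem: "?is \<in> ?S"
    by (auto simp: dl_def)
  have ne: "?S \<noteq> {}"
  proof
    assume "?S = {}"
    then have "?is \<notin> ?S" by (rule equals0D)
    then show False using mem by (rule notE)
  qed
  have fin: "finite ?S" by (rule finite_emb)
  have "card ?S > 0" by (rule card_gt_0_iff[THEN iffD2, OF conjI[OF ne fin]])
  then show ?thesis unfolding emb_num_def .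
qed

lemma dl_seqs: "y \<in> seqs q (Suc n) \<Longrightarrow> dl k y \<in> seqs q n"
  unfolding seqs_def dl_def idxf_def by auto

lemma post_eq:
  assumes "x \<in> seqs q n" "q \<ge> 2"
  shows "post_prob q n 1 y x = real (emb_num x y) / (\<Sum>x'\<in>seqs q n. real (emb_num x' y))"
proof -
  define c where "c = real ((n + 1) choose 1) * real q ^ 1"
  have c: "c > 0" using assms(2) unfolding c_def by simp
  have I: "\<And>z. z \<in> seqs q n \<Longrightarrow> ins_prob q 1 y z = real (emb_num z y) / c"
    unfolding ins_prob_def c_def seqs_def by simp
  have "(\<Sum>x'\<in>seqs q n. ins_prob q 1 y x') = (\<Sum>x'\<in>seqs q n. real (emb_num x' y) / c)"
    by (rule sum.cong[OF refl I])
  also have "\<dots> = (\<Sum>x'\<in>seqs q n. real (emb_num x' y)) / c"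
    by (simp add: sum_divide_distrib)
  finally have "(\<Sum>x'\<in>seqs q n. ins_prob q 1 y x') = (\<Sum>x'\<in>seqs q n. real (emb_num x' y)) / c" .
  then show ?thesis unfolding post_prob_def using I[OF assms(1)] c by simp
qed

lemma entropy_eq:
  assumes "q \<ge> 2"
  shows "input_entropy q n 1 y = - (\<Sum>x\<in>seqs q n. (real (emb_num x y) / (\<Sum>x'\<in>seqs q n. real (emb_num x' y)))
     * log 2 (real (emb_num x y) / (\<Sum>x'\<in>seqs q n. real (emb_num x' y))))"
  unfolding input_entropy_def using post_eq[OF _ assms] by simp

lemma emb_const_zero:
  assumes "length x = n" "x \<noteq> replicate n a"
  shows "emb_num x (replicate (Suc n) a) = 0"
proof -
  have "{is :: nat list. length is = length x \<and> sorted_wrt (<) is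
      \<and> (\<forall>i\<in>set is. i < length (replicate (Suc n) a)) \<and> (\<forall>j<length x. (replicate (Suc n) a) ! (is ! j) = x ! j)} = {}"
  proof (rule ccontr)
    assume "\<not> ?thesis"
    then obtain ix where h: "length ix = length x" "\<forall>i\<in>set ix. i < Suc n"
       "\<forall>j<length x. (replicate (Suc n) a) ! (ix ! j) = x ! j" by auto
    have "\<forall>j<n. x ! j = a"
    proof (intro allI impI)
      fix j assume "j < n"
      then have "ix ! j \<in> set ix" using h assms by simp
      then have "ix ! j < Suc n" using h by auto
      then have "replicate (Suc n) a ! (ix ! j) = a" by (rule nth_replicate)
      moreover have "replicate (Suc n) a ! (ix ! j) = x ! j" using h(3) \<open>j < n\<close> assms(1) by blast
      ultimately show "x ! j = a" by simp
    qed
    then have "x = replicate n a" using assms by (simp add: list_eq_iff_nth_eq)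
    then show False using assms by simp
  qed
  then show ?thesis unfolding emb_num_def by (simp only: card.empty)
qed

theorem theorem8:
  fixes q n :: nat
  assumes "q \<ge> 2" and "n \<ge> 1"
  shows "Min (input_entropy q n 1 ` seqs q (n + 1)) = 0
    \<and> (\<forall>y\<in>seqs q (n + 1). input_entropy q n 1 y = Min (input_entropy q n 1 ` seqs q (n + 1))
          \<longrightarrow> num_runs y = 1)"
proof -
  let ?E = "input_entropy q n 1"
  have A: "\<forall>y\<in>seqs q (n+1). ?E y \<ge> 0"
  proof
    fix y assume "y \<in> seqs q (n+1)"
    show "0 \<le> ?E y" unfolding entropy_eq[OF assms(1)]
      by (rule ent_nonneg[OF finite_seqs]) simp
  qed
  define y0 where "y0 = replicate (Suc n) (0::nat)"
  have y0: "y0 \<in> seqs q (n+1)" using assms unfolding y0_def seqs_def by auto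
  have B: "?E y0 = 0"
    unfolding entropy_eq[OF assms(1)] y0_def
    by (rule ent_zero[OF finite_seqs, where zz = "replicate n 0"])
       (intro ballI impI, simp only: of_nat_eq_0_iff, rule emb_const_zero, simp add: seqs_def, assumption)
  have C: "?E y > 0" if y: "y \<in> seqs q (n+1)" and r: "num_runs y \<noteq> 1" for y
  proof -
    have len: "length y = Suc n" using y by (simp add: seqs_def)
    have "{i. Suc i < length y \<and> y ! i \<noteq> y ! Suc i} \<noteq> {}"
    proof
      assume "{i. Suc i < length y \<and> y ! i \<noteq> y ! Suc i} = {}"
      moreover have "y \<noteq> []" using len by auto
      ultimately have "num_runs y = 1" unfolding num_runs_def by (metis card.empty add.right_neutral)
      then show False using r by simp
    qed
    then obtain i where i: "Suc i < length y" "y ! i \<noteq> y ! Suc i" by auto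
    have d: "dl i y \<noteq> dl (Suc i) y"
    proof
      assume "dl i y = dl (Suc i) y"
      then have "dl i y ! i = dl (Suc i) y ! i" by simp
      then show False using i by (simp add: dl_def idxf_def)
    qed
    show ?thesis
      unfolding entropy_eq[OF assms(1)]
      by (rule ent_pos[OF finite_seqs _ dl_seqs dl_seqs d])
         (simp, use y in simp, use y in simp, simp add: emb_dl_pos len, simp add: emb_dl_pos len)
  qed
  have fin: "finite (?E ` seqs q (n+1))" using finite_seqs by simp
  have M: "Min (?E ` seqs q (n+1)) = 0"
    by (rule Min_eqI[OF fin]) (use A y0 B in auto)
  show ?thesis using M C by force
qed

end
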